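(* Let $m,M,T$ be positive integers with $M<T$, let $\Pi_{\mathcal{A}}^M=\{p_a(\mathbf{z}_{1:M}):a\in\mathcal{A}\}$ be a family of probability densities on $\mathbb{R}^{mM}$ and $\mathcal{P}_{\mathcal{B}}^M=\{p_b(\mathbf{z}_t\mid\mathbf{z}_{t-1},\dots,\mathbf{z}_{t-M}):b\in\mathcal{B}\}$ a family of conditional densities on $\mathbb{R}^m$ given $\mathbb{R}^{mM}$. Assume the functions in the trajectory family $\mathcal{P}^{T,M}_{\mathcal{A},\mathcal{B}}=\{p_a(\mathbf{z}_{1:M})\prod_{t=M+1}^Tp_{b_t}(\mathbf{z}_t\mid\mathbf{z}_{t-1},\dots,\mathbf{z}_{t-M}) : a\in\mathcal{A},\ b_t\in\mathcal{B}\}$ are linearly independent under finite mixtures on $\mathbb{R}^{mT}$. Then the MSM family $\mathcal{M}^T(\Pi_{\mathcal{A}}^M,\mathcal{P}_{\mathcal{B}}^M)$ is identifiable up to permutations.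
   Context: A family of functions $\{g_\alpha:\alpha\in\mathcal{S}\}$ defined on a set $D$ is linearly independent under finite mixtures (on $D$) if for every finite $\mathcal{S}_0\subset\mathcal{S}$ the functions $\{g_\alpha:\alpha\in\mathcal{S}_0\}$ are linearly independent as functions on $D$ (the trajectory family is indexed by tuples $(a,b_{M+1},\dots,b_T)$). MSM family $\mathcal{M}^T(\Pi_{\mathcal{A}}^M,\mathcal{P}_{\mathcal{B}}^M)$: all functions $p(\mathbf{z}_{1:T})=\sum_{i=1}^{C}c_ip_{a^i}(\mathbf{z}_{1:M})\prod_{t=M+1}^Tp_{b^i_t}(\mathbf{z}_t\mid\mathbf{z}_{t-1},\dots,\mathbf{z}_{t-M})$, where $K_0,K<+\infty$, $\mathcal{A}_0\subset\mathcal{A}$, $\mathcal{B}_0\subset\mathcal{B}$, $|\mathcal{A}_0|=K_0$, $|\mathcal{B}_0|=K$, $C=K_0K^{T-M}$, $a^i\in\mathcal{A}_0$, $b^i_t\in\mathcal{B}_0$, the tuples $(a^i,b^i_{M+1},\dots,b^i_T)$ pairwise distinct, $c_i>0$, $\sum_ic_i=1$. Identifiable up to permutations: for any $p,\tilde p$ in the family (with data $(C,K_0,K,c_i,a^i,b^i_t)$ and $(\tilde C,\tilde K_0,\tilde K,\tilde c_i,\tilde a^i,\tilde b^i_t)$), $p=\tilde p$ on $\mathbb{R}^{mT}$ implies $C=\tilde C$, $K_0=\tilde K_0$, $K=\tilde K$, and for each $i$ there is $j$ with: (1) $c_i=\tilde c_j$; (2) $b^i_{t_1}=b^i_{t_2}$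 for $M<t_1\ne t_2\le T$ implies $\tilde b^j_{t_1}=\tilde b^j_{t_2}$; (3) $p_{a^i}=p_{\tilde a^j}$ on $\mathbb{R}^{mM}$; (4) $p_{b^i_t}=p_{\tilde b^j_t}$ on $\mathbb{R}^{m(M+1)}$ for all $M<t\le T$. *)

theory Defs
  imports "HOL-Analysis.Analysis"
begin

text \<open>Conventions: time is 0-indexed, so z_1..z_T of the paper are z 0 .. z (T-1).
  A point of R^(mk) is an extensional function from {..<k} to real^'m.\<close>

definition Rspace :: "nat \<Rightarrow> (nat \<Rightarrow> real^'m) set" where
  "Rspace k = (\<Pi>\<^sub>E i\<in>{..<k}. (UNIV :: (real^'m) set))"

definition Rmeasure :: "nat \<Rightarrow> (nat \<Rightarrow> real^'m) measure" where
  "Rmeasure k = (\<Pi>\<^sub>M i\<in>{..<k}. (lborel :: (real^'m) measure))"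

definition is_density :: "nat \<Rightarrow> ((nat \<Rightarrow> real^'m) \<Rightarrow> real) \<Rightarrow> bool" where
  "is_density k f \<longleftrightarrow> f \<in> borel_measurable (Rmeasure k)
     \<and> (\<forall>z\<in>space (Rmeasure k). 0 \<le> f z)
     \<and> (\<integral>\<^sup>+ z. ennreal (f z) \<partial>Rmeasure k) = 1"

definition is_cond_density :: "nat \<Rightarrow> (real^'m \<Rightarrow> (nat \<Rightarrow> real^'m) \<Rightarrow> real) \<Rightarrow> bool" where
  "is_cond_density M g \<longleftrightarrow> (\<forall>x\<in>Rspace M.
       (\<lambda>y. g y x) \<in> borel_measurable lborel
     \<and> (\<forall>y. 0 \<le> g y x)
     \<and> (\<integral>\<^sup>+ y. ennreal (g y x) \<partial>lborel) = 1)"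

definition hist :: "nat \<Rightarrow> nat \<Rightarrow> (nat \<Rightarrow> 'v) \<Rightarrow> (nat \<Rightarrow> 'v)" where
  "hist M t z = (\<lambda>j\<in>{..<M}. z (t - Suc j))"

definition traj :: "nat \<Rightarrow> nat \<Rightarrow> ('a \<Rightarrow> (nat \<Rightarrow> 'v) \<Rightarrow> real)
    \<Rightarrow> ('b \<Rightarrow> 'v \<Rightarrow> (nat \<Rightarrow> 'v) \<Rightarrow> real) \<Rightarrow> 'a \<Rightarrow> (nat \<Rightarrow> 'b) \<Rightarrow> (nat \<Rightarrow> 'v) \<Rightarrow> real" where
  "traj M T pa pb a bs z =
     pa a (restrict z {..<M}) * (\<Prod>t\<in>{M..<T}. pb (bs t) (z t) (hist M t z))"

definition lin_indep_finite_mixtures :: "'i set \<Rightarrow> ('i \<Rightarrow> 'x \<Rightarrow> real) \<Rightarrow> 'x set \<Rightarrow> bool" where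
  "lin_indep_finite_mixtures S g D \<longleftrightarrow>
     (\<forall>S0. S0 \<subseteq> S \<and> finite S0 \<longrightarrow>
        (\<forall>l. (\<forall>z\<in>D. (\<Sum>\<alpha>\<in>S0. l \<alpha> * g \<alpha> z) = 0) \<longrightarrow> (\<forall>\<alpha>\<in>S0. l \<alpha> = 0)))"

definition msm_params :: "'a set \<Rightarrow> 'b set \<Rightarrow> nat \<Rightarrow> nat \<Rightarrow> nat \<Rightarrow> nat \<Rightarrow> nat
    \<Rightarrow> 'a set \<Rightarrow> 'b set \<Rightarrow> (nat \<Rightarrow> real) \<Rightarrow> (nat \<Rightarrow> 'a) \<Rightarrow> (nat \<Rightarrow> nat \<Rightarrow> 'b) \<Rightarrow> bool" where
  "msm_params A B M T C K0 K A0 B0 c a b \<longleftrightarrow>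
     A0 \<subseteq> A \<and> B0 \<subseteq> B \<and> finite A0 \<and> finite B0 \<and> card A0 = K0 \<and> card B0 = K
     \<and> C = K0 * K ^ (T - M)
     \<and> (\<forall>i<C. a i \<in> A0 \<and> (\<forall>t\<in>{M..<T}. b i t \<in> B0))
     \<and> (\<forall>i<C. \<forall>j<C. i \<noteq> j \<longrightarrow> (a i \<noteq> a j \<or> (\<exists>t\<in>{M..<T}. b i t \<noteq> b j t)))
     \<and> (\<forall>i<C. 0 < c i) \<and> (\<Sum>i<C. c i) = 1"

definition msm_fun :: "nat \<Rightarrow> nat \<Rightarrow> ('a \<Rightarrow> (nat \<Rightarrow> 'v) \<Rightarrow> real)
    \<Rightarrow> ('b \<Rightarrow> 'v \<Rightarrow> (nat \<Rightarrow> 'v) \<Rightarrow> real) \<Rightarrow> nat \<Rightarrow> (nat \<Rightarrow> real) \<Rightarrow> (nat \<Rightarrow> 'a)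
    \<Rightarrow> (nat \<Rightarrow> nat \<Rightarrow> 'b) \<Rightarrow> (nat \<Rightarrow> 'v) \<Rightarrow> real" where
  "msm_fun M T pa pb C c a b z = (\<Sum>i<C. c i * traj M T pa pb (a i) (b i) z)"

end

theory Submission
  imports Defs
begin

lemma params_struct:
  assumes P: "msm_params A B M T C K0 K A0 B0 c a b" and MT: "M < T"
  defines "\<tau> \<equiv> (\<lambda>i. (a i, restrict (b i) {M..<T}))"
  shows "inj_on \<tau> {..<C}" "\<tau> ` {..<C} = A0 \<times> (\<Pi>\<^sub>E t\<in>{M..<T}. B0)" "0 < C"
    "A0 \<noteq> {}" "B0 \<noteq> {}" "\<tau> ` {..<C} \<subseteq> A \<times> (\<Pi>\<^sub>E t\<in>{M..<T}. B)"
    "card A0 = K0" "card B0 = K" "finite A0" "finite B0"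
proof -
  note p = P[unfolded msm_params_def]
  show inj: "inj_on \<tau> {..<C}"
  proof (rule inj_onI)
    fix i j assume "i \<in> {..<C}" "j \<in> {..<C}" "\<tau> i = \<tau> j"
    then show "i = j" using p unfolding \<tau>_def
      by (auto simp: restrict_def fun_eq_iff) (metis atLeastLessThan_iff)
  qed
  have sub: "\<tau> ` {..<C} \<subseteq> A0 \<times> (\<Pi>\<^sub>E t\<in>{M..<T}. B0)" using p unfolding \<tau>_def by auto
  have cardP: "card (A0 \<times> (\<Pi>\<^sub>E t\<in>{M..<T}. B0)) = C"
    using p by (simp add: card_cartesian_product card_PiE)
  have fin: "finite (A0 \<times> (\<Pi>\<^sub>E t\<in>{M..<T}. B0))" using p by (simp add: finite_PiE)
  show "\<tau> ` {..<C} = A0 \<times> (\<Pi>\<^sub>E t\<in>{M..<T}. B0)"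
    by (rule card_subset_eq[OF fin sub]) (simp add: card_image[OF inj] cardP)
  show C0: "0 < C" using p by (metis gr0I lessThan_0 sum.empty zero_neq_one)
  show "A0 \<noteq> {}" "B0 \<noteq> {}" using p C0 MT by auto
  show "\<tau> ` {..<C} \<subseteq> A \<times> (\<Pi>\<^sub>E t\<in>{M..<T}. B)" using p unfolding \<tau>_def by auto
  show "card A0 = K0" "card B0 = K" "finite A0" "finite B0" using p by auto
qed

lemma proj_B:
  fixes M T :: nat
  assumes "A0 \<noteq> {}" "M < T"
  shows "(\<lambda>p. snd p M) ` (A0 \<times> (\<Pi>\<^sub>E t\<in>{M..<T}. B0)) = B0"
proof
  show "(\<lambda>p. snd p M) ` (A0 \<times> (\<Pi>\<^sub>E t\<in>{M..<T}. B0)) \<subseteq> B0"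
  proof
    fix x assume "x \<in> (\<lambda>p. snd p M) ` (A0 \<times> (\<Pi>\<^sub>E t\<in>{M..<T}. B0))"
    then obtain p where p: "p \<in> A0 \<times> (\<Pi>\<^sub>E t\<in>{M..<T}. B0)" "x = snd p M" by blast
    have "snd p \<in> (\<Pi>\<^sub>E t\<in>{M..<T}. B0)" using p(1) by (simp add: mem_Times_iff)
    then have "snd p M \<in> B0" by (rule PiE_mem) (use assms(2) in simp)
    then show "x \<in> B0" using p(2) by simp
  qed
  show "B0 \<subseteq> (\<lambda>p. snd p M) ` (A0 \<times> (\<Pi>\<^sub>E t\<in>{M..<T}. B0))"
  proof
    fix x assume x: "x \<in> B0"
    obtain a0 where "a0 \<in> A0" using assms by auto
    then have h: "(a0, \<lambda>t\<in>{M..<T}. x) \<in> A0 \<times> (\<Pi>\<^sub>E t\<in>{M..<T}. B0)" using x by auto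
    show "x \<in> (\<lambda>p. snd p M) ` (A0 \<times> (\<Pi>\<^sub>E t\<in>{M..<T}. B0))"
      by (rule image_eqI[OF _ h]) (use assms(2) in simp)
  qed
qed

lemma traj_restrict: "traj M T pa pb a (restrict bs {M..<T}) = traj M T pa pb a bs"
  unfolding traj_def by (intro ext) simp

theorem theorem3:
  fixes A :: "'a set" and B :: "'b set"
    and pa :: "'a \<Rightarrow> (nat \<Rightarrow> real^'m) \<Rightarrow> real"
    and pb :: "'b \<Rightarrow> real^'m \<Rightarrow> (nat \<Rightarrow> real^'m) \<Rightarrow> real"
    and M T :: nat
  assumes "1 \<le> M" and "M < T"
    and "\<forall>a\<in>A. is_density M (pa a)"
    and "\<forall>b\<in>B. is_cond_density M (pb b)"
    and "lin_indep_finite_mixtures (A \<times> (\<Pi>\<^sub>E t\<in>{M..<T}. B))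
           (\<lambda>(a, bs). traj M T pa pb a bs) (Rspace T)"
    and "msm_params A B M T C K0 K A0 B0 c a b"
    and "msm_params A B M T C' K0' K' A0' B0' c' a' b'"
    and "\<forall>z\<in>Rspace T. msm_fun M T pa pb C c a b z = msm_fun M T pa pb C' c' a' b' z"
  shows "C = C' \<and> K0 = K0' \<and> K = K' \<and>
    (\<forall>i<C. \<exists>j<C'.
        c i = c' j
      \<and> (\<forall>t1\<in>{M..<T}. \<forall>t2\<in>{M..<T}. t1 \<noteq> t2 \<longrightarrow> b i t1 = b i t2 \<longrightarrow> b' j t1 = b' j t2)
      \<and> (\<forall>x\<in>Rspace M. pa (a i) x = pa (a' j) x)
      \<and> (\<forall>t\<in>{M..<T}. \<forall>y. \<forall>x\<in>Rspace M. pb (b i t) y x = pb (b' j t) y x))"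
proof -
  define \<tau> where "\<tau> = (\<lambda>i. (a i, restrict (b i) {M..<T}))"
  define \<tau>' where "\<tau>' = (\<lambda>i. (a' i, restrict (b' i) {M..<T}))"
  note s1 = params_struct[OF assms(6) assms(2), folded \<tau>_def]
  note s2 = params_struct[OF assms(7) assms(2), folded \<tau>'_def]
  define S where "S = \<tau> ` {..<C}"
  define S' where "S' = \<tau>' ` {..<C'}"
  define g where "g = (\<lambda>(a, bs). traj M T pa pb a bs)"
  define l where "l = (\<lambda>\<alpha>. (if \<alpha> \<in> S then c (inv_into {..<C} \<tau> \<alpha>) else 0)
                         - (if \<alpha> \<in> S' then c' (inv_into {..<C'} \<tau>' \<alpha>) else 0))"
  have finS: "finite S" "finite S'" unfolding S_def S'_def by auto
  have g\<tau>: "g (\<tau> i) = traj M T pa pb (a i) (b i)" for i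
    unfolding g_def \<tau>_def by (simp add: traj_restrict)
  have g\<tau>': "g (\<tau>' i) = traj M T pa pb (a' i) (b' i)" for i
    unfolding g_def \<tau>'_def by (simp add: traj_restrict)
  have sumS: "(\<Sum>\<alpha>\<in>S. c (inv_into {..<C} \<tau> \<alpha>) * g \<alpha> z) = msm_fun M T pa pb C c a b z" for z :: "nat \<Rightarrow> real^'m"
    unfolding S_def msm_fun_def
    by (subst sum.reindex[OF s1(1)]) (simp add: s1(1) g\<tau>)
  have sumS': "(\<Sum>\<alpha>\<in>S'. c' (inv_into {..<C'} \<tau>' \<alpha>) * g \<alpha> z) = msm_fun M T pa pb C' c' a' b' z" for z :: "nat \<Rightarrow> real^'m"
    unfolding S'_def msm_fun_def
    by (subst sum.reindex[OF s2(1)]) (simp add: s2(1) g\<tau>')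
  have zero: "\<forall>z::nat\<Rightarrow>real^'m\<in>Rspace T. (\<Sum>\<alpha>\<in>S \<union> S'. l \<alpha> * g \<alpha> z) = 0"
  proof
    fix z :: "nat \<Rightarrow> real^'m" assume z: "z \<in> Rspace T"
    have "(\<Sum>\<alpha>\<in>S \<union> S'. l \<alpha> * g \<alpha> z) =
      (\<Sum>\<alpha>\<in>S \<union> S'. (if \<alpha> \<in> S then c (inv_into {..<C} \<tau> \<alpha>) * g \<alpha> z else 0))
      - (\<Sum>\<alpha>\<in>S \<union> S'. (if \<alpha> \<in> S' then c' (inv_into {..<C'} \<tau>' \<alpha>) * g \<alpha> z else 0))"
      unfolding l_def sum_subtractf[symmetric] by (intro sum.cong) (auto simp: algebra_simps)
    also have "\<dots> = (\<Sum>\<alpha>\<in>S. c (inv_into {..<C} \<tau> \<alpha>) * g \<alpha> z)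
        - (\<Sum>\<alpha>\<in>S'. c' (inv_into {..<C'} \<tau>' \<alpha>) * g \<alpha> z)"
      using finS by (simp add: sum.If_cases Int_absorb1 Int_absorb2)
    also have "\<dots> = 0" using sumS sumS' assms(8) z by simp
    finally show "(\<Sum>\<alpha>\<in>S \<union> S'. l \<alpha> * g \<alpha> z) = 0" .
  qed
  have "S \<union> S' \<subseteq> A \<times> (\<Pi>\<^sub>E t\<in>{M..<T}. B)" using s1(6) s2(6) unfolding S_def S'_def by auto
  then have lz: "\<forall>\<alpha>\<in>S \<union> S'. l \<alpha> = 0"
    using assms(5) zero finS unfolding lin_indep_finite_mixtures_def g_def by blast
  have c1: "\<tau> i \<in> S' \<and> c i = c' (inv_into {..<C'} \<tau>' (\<tau> i))" if i: "i < C" for i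
  proof -
    have "\<tau> i \<in> S" using i unfolding S_def by auto
    moreover have "inv_into {..<C} \<tau> (\<tau> i) = i" using s1(1) i by simp
    moreover have "0 < c i" using assms(6) i unfolding msm_params_def by auto
    ultimately show ?thesis using lz unfolding l_def by (auto split: if_splits)
  qed
  have c2: "\<tau>' j \<in> S" if j: "j < C'" for j
  proof -
    have "\<tau>' j \<in> S'" using j unfolding S'_def by auto
    moreover have "inv_into {..<C'} \<tau>' (\<tau>' j) = j" using s2(1) j by simp
    moreover have "0 < c' j" using assms(7) j unfolding msm_params_def by auto
    ultimately show ?thesis using lz unfolding l_def by (auto split: if_splits)
  qed
  have SS: "S = S'" using c1 c2 unfolding S_def S'_def by auto
  have CC: "C = C'" using SS card_image[OF s1(1)] card_image[OF s2(1)] unfolding S_def S'_def by simp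
  have P: "A0 \<times> (\<Pi>\<^sub>E t\<in>{M..<T}. B0) = A0' \<times> (\<Pi>\<^sub>E t\<in>{M..<T}. B0')"
    using SS s1(2) s2(2) unfolding S_def S'_def by simp
  have "A0 = A0'"
  proof -
    have ne: "(\<Pi>\<^sub>E t\<in>{M..<T}. B0) \<noteq> {}" "(\<Pi>\<^sub>E t\<in>{M..<T}. B0') \<noteq> {}"
      using s1(5) s2(5) by (auto simp: PiE_eq_empty_iff)
    have "fst ` (A0 \<times> (\<Pi>\<^sub>E t\<in>{M..<T}. B0)) = fst ` (A0' \<times> (\<Pi>\<^sub>E t\<in>{M..<T}. B0'))"
      using P by simp
    then show ?thesis using ne by (simp add: fst_image_times)
  qed
  moreover have "B0 = B0'"
    using proj_B[OF s1(4) assms(2), of B0] proj_B[OF s2(4) assms(2), of B0'] P by simp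
  ultimately have KK: "K0 = K0'" "K = K'" using s1(7,8) s2(7,8) by auto
  have main: "\<exists>j<C'. c i = c' j
      \<and> (\<forall>t1\<in>{M..<T}. \<forall>t2\<in>{M..<T}. t1 \<noteq> t2 \<longrightarrow> b i t1 = b i t2 \<longrightarrow> b' j t1 = b' j t2)
      \<and> (\<forall>x\<in>Rspace M. pa (a i) x = pa (a' j) x)
      \<and> (\<forall>t\<in>{M..<T}. \<forall>y. \<forall>x\<in>Rspace M. pb (b i t) y x = pb (b' j t) y x)" if i: "i < C" for i
  proof -
    define j where "j = inv_into {..<C'} \<tau>' (\<tau> i)"
    have "\<tau> i \<in> \<tau>' ` {..<C'}" using c1[OF i] unfolding S'_def by simp
    then have j: "j < C'" "\<tau>' j = \<tau> i" unfolding j_def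
      using inv_into_into[of "\<tau> i" \<tau>' "{..<C'}"] f_inv_into_f[of "\<tau> i" \<tau>' "{..<C'}"] by auto
    then have "a' j = a i" "\<forall>t\<in>{M..<T}. b' j t = b i t"
      unfolding \<tau>_def \<tau>'_def by (auto simp: fun_eq_iff restrict_def) (metis atLeastLessThan_iff)+
    then show ?thesis using j(1) c1[OF i] unfolding j_def[symmetric] by (intro exI[of _ j]) auto
  qed
  show ?thesis using CC KK main by blast
qed

end
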